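(* Let $G$ be a $2K_2$-free graph, let $a,b$ be adjacent vertices of $G$, and let $X$ be a minimal dominating set of $G$ with $a,b\in X$ and $|X|>\alpha(G)$. Let $N$ be the set of vertices not in $\{a,b\}$ adjacent to at least one of $a,b$ and let $Y=X\cap N$. Then $|Y|=1$ and the unique vertex of $Y$ is adjacent to both $a$ and $b$.
   Context: All graphs are finite, simple and undirected. $2K_2$-free means no induced subgraph isomorphic to the disjoint union of two edges. $\alpha(G)$ is the maximum size of an independent set of $G$. A dominating set is a vertex set $D$ such that every vertex outside $D$ has a neighbour in $D$; it is minimal if no proper subset is dominating. *)

theory Defs
  imports Main
begin

definition graph :: "'a set \<Rightarrow> ('a \<Rightarrow> 'a \<Rightarrow> bool) \<Rightarrow> bool" where
  "graph V E \<longleftrightarrow> finite V \<and> (\<forall>x y. E x y \<longrightarrow> x \<in> V \<and> y \<in> V)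
     \<and> (\<forall>x y. E x y \<longrightarrow> E y x) \<and> (\<forall>x. \<not> E x x)"

definition twoK2_free :: "'a set \<Rightarrow> ('a \<Rightarrow> 'a \<Rightarrow> bool) \<Rightarrow> bool" where
  "twoK2_free V E \<longleftrightarrow> \<not> (\<exists>a\<in>V. \<exists>b\<in>V. \<exists>c\<in>V. \<exists>d\<in>V.
      distinct [a, b, c, d] \<and> E a b \<and> E c d \<and>
      \<not> E a c \<and> \<not> E a d \<and> \<not> E b c \<and> \<not> E b d)"

definition independent_set :: "'a set \<Rightarrow> ('a \<Rightarrow> 'a \<Rightarrow> bool) \<Rightarrow> 'a set \<Rightarrow> bool" where
  "independent_set V E S \<longleftrightarrow> S \<subseteq> V \<and> (\<forall>x\<in>S. \<forall>y\<in>S. \<not> E x y)"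

definition independence_number :: "'a set \<Rightarrow> ('a \<Rightarrow> 'a \<Rightarrow> bool) \<Rightarrow> nat" where
  "independence_number V E = Max (card ` {S. independent_set V E S})"

definition dominating_set :: "'a set \<Rightarrow> ('a \<Rightarrow> 'a \<Rightarrow> bool) \<Rightarrow> 'a set \<Rightarrow> bool" where
  "dominating_set V E D \<longleftrightarrow> D \<subseteq> V \<and> (\<forall>v\<in>V - D. \<exists>u\<in>D. E v u)"

definition minimal_dominating_set :: "'a set \<Rightarrow> ('a \<Rightarrow> 'a \<Rightarrow> bool) \<Rightarrow> 'a set \<Rightarrow> bool" where
  "minimal_dominating_set V E D \<longleftrightarrow> dominating_set V E D \<and>
     (\<forall>D'. D' \<subset> D \<longrightarrow> \<not> dominating_set V E D')"

end

theory Submission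
  imports Defs
begin

lemma alpha_ge:
  assumes "graph V E" "independent_set V E S"
  shows "card S \<le> independence_number V E"
proof -
  have fin: "finite V" using assms(1) by (simp add: graph_def)
  have "{S. independent_set V E S} \<subseteq> Pow V" by (auto simp: independent_set_def)
  hence "finite {S. independent_set V E S}" using fin by (meson finite_Pow_iff rev_finite_subset)
  hence "finite (card ` {S. independent_set V E S})" by simp
  moreover have "card S \<in> card ` {S. independent_set V E S}" using assms(2) by simp
  ultimately show ?thesis unfolding independence_number_def by simp
qed

lemma private_nb:
  assumes g: "graph V E" and m: "minimal_dominating_set V E X"
    and x: "x \<in> X" and w: "w \<in> X" and xw: "E x w"
  shows "\<exists>p. p \<in> V \<and> p \<notin> X \<and> E p x \<and> E x p \<and> (\<forall>u\<in>X. E p u \<longrightarrow> u = x) \<and> (\<forall>u\<in>X. E u p \<longrightarrow> u = x)"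
proof -
  have d: "dominating_set V E X" and mn: "\<forall>D'. D' \<subset> X \<longrightarrow> \<not> dominating_set V E D'"
    using m by (auto simp: minimal_dominating_set_def)
  have sym: "\<And>p q. E p q \<Longrightarrow> E q p" using g by (auto simp: graph_def)
  have irr: "\<And>p. \<not> E p p" using g by (auto simp: graph_def)
  have XV: "X \<subseteq> V" using d by (simp add: dominating_set_def)
  have "X - {x} \<subset> X" using x by auto
  hence "\<not> dominating_set V E (X - {x})" using mn by blast
  moreover have "X - {x} \<subseteq> V" using XV by auto
  ultimately obtain v where v: "v \<in> V - (X - {x})" and nv: "\<forall>u\<in>X - {x}. \<not> E v u"
    unfolding dominating_set_def by blast
  have wx: "w \<noteq> x" using xw irr by auto
  have "v \<noteq> x" using nv w wx xw by auto
  hence vX: "v \<notin> X" using v by auto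
  then obtain u where "u \<in> X" "E v u" using d v unfolding dominating_set_def by auto
  hence "u = x" using nv by auto
  hence "E v x" using \<open>E v u\<close> by simp
  show ?thesis
    apply (rule exI[of _ v])
    using v vX \<open>E v x\<close> sym nv by blast
qed

lemma k2:
  assumes "twoK2_free V E" "a \<in> V" "b \<in> V" "c \<in> V" "d \<in> V"
    "distinct [a, b, c, d]" "E a b" "E c d"
  shows "E a c \<or> E a d \<or> E b c \<or> E b d"
  using assms unfolding twoK2_free_def by blast

theorem lemma5p2:
  fixes V :: "'a set" and E :: "'a \<Rightarrow> 'a \<Rightarrow> bool" and a b :: 'a and X :: "'a set"
  assumes "graph V E"
    and "twoK2_free V E"
    and "E a b"
    and "minimal_dominating_set V E X"
    and "a \<in> X" and "b \<in> X"
    and "card X > independence_number V E"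
  shows "card (X \<inter> {v \<in> V - {a, b}. E v a \<or> E v b}) = 1 \<and>
         (\<forall>y \<in> X \<inter> {v \<in> V - {a, b}. E v a \<or> E v b}. E y a \<and> E y b)"
proof -
  note g = assms(1) and tk = assms(2) and ab = assms(3) and m = assms(4)
  note aX = assms(5) and bX = assms(6) and big = assms(7)
  have sym: "\<And>p q. E p q \<Longrightarrow> E q p" using g by (auto simp: graph_def)
  have symE: "\<And>p q. E p q = E q p" using sym by blast
  have irr: "\<And>p. \<not> E p p" using g by (auto simp: graph_def)
  have fin: "finite V" using g by (simp add: graph_def)
  have XV: "X \<subseteq> V" using m by (simp add: minimal_dominating_set_def dominating_set_def)
  have finX: "finite X" using fin XV finite_subset by blast
  have K: "\<And>p q r s. p \<in> V \<Longrightarrow> q \<in> V \<Longrightarrow> r \<in> V \<Longrightarrow> s \<in> V \<Longrightarrow> distinct [p,q,r,s]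
     \<Longrightarrow> E p q \<Longrightarrow> E r s \<Longrightarrow> E p r \<or> E p s \<or> E q r \<or> E q s"
    using k2[OF tk] by blast
  have aV: "a \<in> V" and bV: "b \<in> V" using aX bX XV by auto
  have anb: "a \<noteq> b" using ab irr by auto
  define Y where "Y = X \<inter> {v \<in> V - {a, b}. E v a \<or> E v b}"
  have notind: "\<And>S. independent_set V E S \<Longrightarrow> card S < card X \<Longrightarrow> True" by simp
  have small: "\<And>S. independent_set V E S \<Longrightarrow> card S < card X"
    using alpha_ge[OF g] big by (meson le_less_trans)
  obtain a' where a': "a' \<in> V" "a' \<notin> X" "E a' a" "E a a'" "\<forall>u\<in>X. E a' u \<longrightarrow> u = a" "\<forall>u\<in>X. E u a' \<longrightarrow> u = a"
    using private_nb[OF g m aX bX ab] by blast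
  obtain b' where b': "b' \<in> V" "b' \<notin> X" "E b' b" "E b b'" "\<forall>u\<in>X. E b' u \<longrightarrow> u = b" "\<forall>u\<in>X. E u b' \<longrightarrow> u = b"
    using private_nb[OF g m bX aX sym[OF ab]] by blast
  have Zind: "\<And>p q. p \<in> X - Y - {a,b} \<Longrightarrow> q \<in> X - Y - {a,b} \<Longrightarrow> \<not> E p q"
  proof
    fix p q assume p: "p \<in> X - Y - {a,b}" and q: "q \<in> X - Y - {a,b}" and pq: "E p q"
    have "p \<noteq> q" using pq irr by auto
    moreover have "\<not> E p a" "\<not> E p b" "\<not> E q a" "\<not> E q b" using p q XV unfolding Y_def by auto
    moreover have "p \<in> V" "q \<in> V" using p q XV by auto
    ultimately have n4: "\<not> E a p" "\<not> E b p" "\<not> E a q" "\<not> E b q" "p \<in> V" "q \<in> V" "p \<noteq> q"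
      using sym by blast+
    have "distinct [a, b, p, q]" using p q anb n4(7) by auto
    show False using K[OF aV bV n4(5) n4(6) \<open>distinct [a, b, p, q]\<close> ab pq] n4 by blast
  qed
  have Zna: "\<And>p. p \<in> X - Y - {a,b} \<Longrightarrow> \<not> E p a \<and> \<not> E a p \<and> \<not> E p b \<and> \<not> E b p"
    using XV sym unfolding Y_def by blast
  have W: "\<And>p q. p \<in> V \<Longrightarrow> q \<in> V \<Longrightarrow> p \<noteq> a \<Longrightarrow> p \<noteq> b \<Longrightarrow> q \<noteq> a \<Longrightarrow> q \<noteq> b
     \<Longrightarrow> \<not> E a p \<Longrightarrow> \<not> E b p \<Longrightarrow> \<not> E a q \<Longrightarrow> \<not> E b q \<Longrightarrow> \<not> E p q"
  proof
    fix p q assume h: "p \<in> V" "q \<in> V" "p \<noteq> a" "p \<noteq> b" "q \<noteq> a" "q \<noteq> b"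
      "\<not> E a p" "\<not> E b p" "\<not> E a q" "\<not> E b q" and pq: "E p q"
    have "p \<noteq> q" using pq irr by metis
    hence "distinct [a, b, p, q]" using h anb by simp
    thus False using K[OF aV bV h(1) h(2) _ ab pq] h by blast
  qed
  have "\<forall>y\<in>Y. \<exists>q. q \<in> V \<and> q \<notin> X \<and> E q y \<and> E y q \<and> (\<forall>u\<in>X. E q u \<longrightarrow> u = y) \<and> (\<forall>u\<in>X. E u q \<longrightarrow> u = y)"
  proof
    fix y assume y: "y \<in> Y"
    have yX: "y \<in> X" using y unfolding Y_def by blast
    have "\<exists>w\<in>X. E y w" using y aX bX unfolding Y_def by blast
    then obtain w where "w \<in> X" "E y w" by blast
    thus "\<exists>q. q \<in> V \<and> q \<notin> X \<and> E q y \<and> E y q \<and> (\<forall>u\<in>X. E q u \<longrightarrow> u = y) \<and> (\<forall>u\<in>X. E u q \<longrightarrow> u = y)"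
      using private_nb[OF g m yX] by blast
  qed
  then obtain pr where pr: "\<forall>y\<in>Y. pr y \<in> V \<and> pr y \<notin> X \<and> E (pr y) y \<and> E y (pr y) \<and> (\<forall>u\<in>X. E (pr y) u \<longrightarrow> u = y) \<and> (\<forall>u\<in>X. E u (pr y) \<longrightarrow> u = y)"
    by metis
  have YX: "Y \<subseteq> X" and Yab: "a \<notin> Y" "b \<notin> Y" unfolding Y_def by auto
  have finY: "finite Y" using finX YX finite_subset by blast
  have prV: "\<And>y. y \<in> Y \<Longrightarrow> pr y \<in> V" and prX: "\<And>y. y \<in> Y \<Longrightarrow> pr y \<notin> X"
    and prE: "\<And>y. y \<in> Y \<Longrightarrow> E y (pr y)"
    and prN: "\<And>y u. y \<in> Y \<Longrightarrow> u \<in> X \<Longrightarrow> u \<noteq> y \<Longrightarrow> \<not> E u (pr y)"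
    and prN2: "\<And>y u. y \<in> Y \<Longrightarrow> u \<in> X \<Longrightarrow> u \<noteq> y \<Longrightarrow> \<not> E (pr y) u"
    using pr by blast+
  have prab: "\<And>y. y \<in> Y \<Longrightarrow> \<not> E a (pr y) \<and> \<not> E b (pr y) \<and> pr y \<noteq> a \<and> pr y \<noteq> b"
    using prN prX aX bX Yab by metis
  have inj: "inj_on pr Y"
  proof (rule inj_onI)
    fix y z assume y: "y \<in> Y" and z: "z \<in> Y" and e: "pr y = pr z"
    have "E z (pr y)" using prE[OF z] e by simp
    thus "y = z" using prN[OF y] z YX by blast
  qed
  have Zab: "\<And>p. p \<in> X - Y - {a,b} \<Longrightarrow> \<not> E a p \<and> \<not> E b p \<and> p \<in> V \<and> p \<noteq> a \<and> p \<noteq> b"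
    using Zna XV by blast
  define Z where "Z = X - Y - {a,b}"
  have finZ: "finite Z" unfolding Z_def using finX by simp
  have cardX: "card X = card Z + card Y + 2"
  proof -
    have "X = insert a (insert b (Z \<union> Y))" unfolding Z_def using aX bX YX by auto
    moreover have "card (Z \<union> Y) = card Z + card Y"
      by (rule card_Un_disjoint) (auto simp: Z_def finZ finY finX)
    moreover have "a \<notin> Z \<union> Y" "b \<notin> Z \<union> Y" unfolding Z_def using Yab by auto
    ultimately show ?thesis using anb finZ finY by simp
  qed
  have ZP: "\<And>p q. p \<in> Z \<union> pr ` Y \<Longrightarrow> q \<in> Z \<union> pr ` Y \<Longrightarrow> \<not> E p q"
  proof -
    fix p q assume p: "p \<in> Z \<union> pr ` Y" and q: "q \<in> Z \<union> pr ` Y"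
    have "p \<in> V \<and> p \<noteq> a \<and> p \<noteq> b \<and> \<not> E a p \<and> \<not> E b p" using p Zab prab prV unfolding Z_def by blast
    moreover have "q \<in> V \<and> q \<noteq> a \<and> q \<noteq> b \<and> \<not> E a q \<and> \<not> E b q" using q Zab prab prV unfolding Z_def by blast
    ultimately show "\<not> E p q" using W by blast
  qed
  have cardZP: "card (Z \<union> pr ` Y) = card Z + card Y"
  proof -
    have "card (Z \<union> pr ` Y) = card Z + card (pr ` Y)"
      by (rule card_Un_disjoint) (use finZ finY prX in \<open>auto simp: Z_def\<close>)
    thus ?thesis using card_image[OF inj] by simp
  qed
  have optB: "\<exists>y1\<in>Y. E b' (pr y1)"
  proof (rule ccontr)
    assume nB: "\<not> (\<exists>y1\<in>Y. E b' (pr y1))"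
    define I where "I = insert a (insert b' (Z \<union> pr ` Y))"
    have b'n: "b' \<notin> Z \<union> pr ` Y"
    proof
      assume "b' \<in> Z \<union> pr ` Y"
      moreover have "b' \<notin> Z" using b'(2) unfolding Z_def by blast
      ultimately obtain y where y: "y \<in> Y" "b' = pr y" by blast
      hence "E y b'" using prE by simp
      thus False using b'(6) y YX Yab by blast
    qed
    have an: "a \<notin> Z \<union> pr ` Y" using prX aX unfolding Z_def by blast
    have "a \<noteq> b'" using b'(2) aX by blast
    hence "card I = card X" unfolding I_def using b'n an cardZP cardX finZ finY by simp
    moreover have "independent_set V E I" unfolding independent_set_def
    proof (intro conjI ballI)
      show "I \<subseteq> V" unfolding I_def using aV b'(1) prV XV unfolding Z_def by blast
    next
      fix p q assume p: "p \<in> I" and q: "q \<in> I"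
      have aI: "\<And>r. r \<in> I \<Longrightarrow> \<not> E a r"
        using prab Zab b'(6) aX anb irr unfolding I_def Z_def by blast
      have bI: "\<And>r. r \<in> I \<Longrightarrow> \<not> E b' r"
      proof -
        fix r assume r: "r \<in> I"
        show "\<not> E b' r"
        proof (cases "r \<in> pr ` Y")
          case True then show ?thesis using nB by blast
        next
          case False
          hence "r = a \<or> r = b' \<or> r \<in> Z" using r unfolding I_def by blast
          then show ?thesis using b'(5) aX anb irr unfolding Z_def by blast
        qed
      qed
      show "\<not> E p q"
      proof (cases "p = a \<or> p = b' \<or> q = a \<or> q = b'")
        case True then show ?thesis using aI bI p q symE by metis
      next
        case False then show ?thesis using p q ZP unfolding I_def by blast
      qed
    qed
    ultimately show False using small by force
  qed
  have optC: "\<exists>y2\<in>Y. E a' (pr y2)"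
  proof (rule ccontr)
    assume nB: "\<not> (\<exists>y1\<in>Y. E a' (pr y1))"
    define I where "I = insert b (insert a' (Z \<union> pr ` Y))"
    have b'n: "a' \<notin> Z \<union> pr ` Y"
    proof
      assume "a' \<in> Z \<union> pr ` Y"
      moreover have "a' \<notin> Z" using a'(2) unfolding Z_def by blast
      ultimately obtain y where y: "y \<in> Y" "a' = pr y" by blast
      hence "E y a'" using prE by simp
      thus False using a'(6) y YX Yab by blast
    qed
    have an: "b \<notin> Z \<union> pr ` Y" using prX bX unfolding Z_def by blast
    have "b \<noteq> a'" using a'(2) bX by blast
    hence "card I = card X" unfolding I_def using b'n an cardZP cardX finZ finY by simp
    moreover have "independent_set V E I" unfolding independent_set_def
    proof (intro conjI ballI)
      show "I \<subseteq> V" unfolding I_def using bV a'(1) prV XV unfolding Z_def by blast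
    next
      fix p q assume p: "p \<in> I" and q: "q \<in> I"
      have aI: "\<And>r. r \<in> I \<Longrightarrow> \<not> E b r"
        using prab Zab a'(6) bX anb irr unfolding I_def Z_def by blast
      have bI: "\<And>r. r \<in> I \<Longrightarrow> \<not> E a' r"
      proof -
        fix r assume r: "r \<in> I"
        show "\<not> E a' r"
        proof (cases "r \<in> pr ` Y")
          case True then show ?thesis using nB by blast
        next
          case False
          hence "r = b \<or> r = a' \<or> r \<in> Z" using r unfolding I_def by blast
          then show ?thesis using a'(5) bX anb irr unfolding Z_def by blast
        qed
      qed
      show "\<not> E p q"
      proof (cases "p = b \<or> p = a' \<or> q = b \<or> q = a'")
        case True then show ?thesis using aI bI p q symE by metis
      next
        case False then show ?thesis using p q ZP unfolding I_def by blast
      qed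
    qed
    ultimately show False using small by force
  qed
  have Yne: "Y \<noteq> {}" using optB by blast
  have Yle: "\<And>y z. y \<in> Y \<Longrightarrow> z \<in> Y \<Longrightarrow> y = z"
  proof (rule ccontr)
    fix y z assume y: "y \<in> Y" and z: "z \<in> Y" and yz: "y \<noteq> z"
    obtain y1 where y1: "y1 \<in> Y" "E b' (pr y1)" using optB by blast
    obtain y2 where y2: "y2 \<in> Y" "E a' (pr y2)" using optC by blast
    have inV: "\<And>w. w \<in> Y \<Longrightarrow> w \<in> V \<and> w \<in> X \<and> w \<noteq> a \<and> w \<noteq> b \<and> (E w a \<or> E w b)"
      unfolding Y_def by blast
    have pa: "\<And>w. w \<in> Y \<Longrightarrow> \<not> E a' w \<and> \<not> E b' w \<and> w \<noteq> a' \<and> w \<noteq> b'"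
      using a'(2,5) b'(2,5) inV by metis
    have pp: "\<And>w. w \<in> Y \<Longrightarrow> pr w \<noteq> a' \<and> pr w \<noteq> b'"
      using prab a'(4) b'(4) by metis
    have ab': "\<not> E a b'" "\<not> E b a'" "a \<noteq> a'" "a \<noteq> b'" "b \<noteq> a'" "b \<noteq> b'"
      using a'(2,5) b'(2,5) aX bX anb symE by metis+
    have s1: "\<And>w. w \<in> Y \<Longrightarrow> w \<noteq> y1 \<Longrightarrow> \<not> E w a"
    proof
      fix w assume w: "w \<in> Y" "w \<noteq> y1" "E w a"
      have d: "distinct [a, w, b', pr y1]" using inV[OF w(1)] pa[OF w(1)] pp[OF y1(1)] prab[OF y1(1)] ab' prX[OF y1(1)] by auto
      have "\<not> E w (pr y1)" using prN[OF y1(1)] w inV by blast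
      thus False using K[OF aV _ b'(1) prV[OF y1(1)] d _ y1(2)] inV[OF w(1)] w(3) symE ab' pa[OF w(1)] prab[OF y1(1)] by metis
    qed
    have s2: "\<And>w. w \<in> Y \<Longrightarrow> w \<noteq> y2 \<Longrightarrow> \<not> E w b"
    proof
      fix w assume w: "w \<in> Y" "w \<noteq> y2" "E w b"
      have d: "distinct [b, w, a', pr y2]" using inV[OF w(1)] pa[OF w(1)] pp[OF y2(1)] prab[OF y2(1)] ab' prX[OF y2(1)] by auto
      have "\<not> E w (pr y2)" using prN[OF y2(1)] w inV by blast
      thus False using K[OF bV _ a'(1) prV[OF y2(1)] d _ y2(2)] inV[OF w(1)] w(3) symE ab' pa[OF w(1)] prab[OF y2(1)] by metis
    qed
    have "y1 \<noteq> y2"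
    proof
      assume e: "y1 = y2"
      have "\<exists>w\<in>Y. w \<noteq> y1" using y z yz by metis
      then obtain w where "w \<in> Y" "w \<noteq> y1" by blast
      thus False using s1 s2 e inV by blast
    qed
    have y1a: "E y1 a" and y1b: "\<not> E y1 b" using s2[OF y1(1)] inV[OF y1(1)] \<open>y1 \<noteq> y2\<close> by auto
    have y2b: "E y2 b" and y2a: "\<not> E y2 a" using s1[OF y2(1)] inV[OF y2(1)] \<open>y1 \<noteq> y2\<close> by auto
    have na1: "\<not> E a' (pr y1)"
    proof
      assume h: "E a' (pr y1)"
      have d: "distinct [b, y2, a', pr y1]" using inV[OF y2(1)] pa[OF y2(1)] pp[OF y1(1)] prab[OF y1(1)] ab' prX[OF y1(1)] by auto
      have "\<not> E y2 (pr y1)" using prN[OF y1(1)] inV[OF y2(1)] \<open>y1 \<noteq> y2\<close> by metis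
      thus False using K[OF bV _ a'(1) prV[OF y1(1)] d _ h] inV[OF y2(1)] y2b symE ab' pa[OF y2(1)] prab[OF y1(1)] by metis
    qed
    have eab: "E a' b'"
    proof -
      have "a' \<noteq> b'" using a'(3) b'(5) aX anb by metis
      hence d: "distinct [a, a', b', pr y1]" using pp[OF y1(1)] prab[OF y1(1)] ab' by auto
      show ?thesis using K[OF aV a'(1) b'(1) prV[OF y1(1)] d a'(4) y1(2)] ab' prab[OF y1(1)] na1 by blast
    qed
    have e12: "E y1 y2"
    proof -
      have d: "distinct [y1, pr y1, y2, pr y2]"
        using \<open>y1 \<noteq> y2\<close> inj y1(1) y2(1) prX[OF y1(1)] prX[OF y2(1)] inV[OF y1(1)] inV[OF y2(1)]
        by (auto dest: inj_onD)
      have "\<not> E (pr y1) (pr y2)" using ZP y1(1) y2(1) by blast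
      moreover have "\<not> E y1 (pr y2)" "\<not> E (pr y1) y2"
        using prN prN2 y1(1) y2(1) inV \<open>y1 \<noteq> y2\<close> by metis+
      ultimately show ?thesis using K[OF _ prV[OF y1(1)] _ prV[OF y2(1)] d prE[OF y1(1)] prE[OF y2(1)]] inV y1(1) y2(1) by blast
    qed
    have "a' \<noteq> b'" using a'(3) b'(5) aX anb by metis
    hence d: "distinct [a', b', y1, y2]" using pa[OF y1(1)] pa[OF y2(1)] \<open>y1 \<noteq> y2\<close> by auto
    show False using K[OF a'(1) b'(1) _ _ d eab e12] inV[OF y1(1)] inV[OF y2(1)] pa[OF y1(1)] pa[OF y2(1)] by blast
  qed
  then obtain y where Yy: "Y = {y}" using Yne by blast
  have yV: "y \<in> V" "y \<in> X" "y \<noteq> a" "y \<noteq> b" "E y a \<or> E y b" using Yy unfolding Y_def by auto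
  have cX: "card X = card (X - {a,b,y}) + 3"
  proof -
    have "X = insert a (insert b (insert y (X - {a,b,y})))" using aX bX yV by auto
    hence "card X = card (insert a (insert b (insert y (X - {a,b,y}))))" by simp
    also have "\<dots> = card (X - {a,b,y}) + 3" using finX anb yV by simp
    finally show ?thesis .
  qed
  have both: "E y a \<and> E y b"
  proof (rule ccontr)
    assume "\<not> (E y a \<and> E y b)"
    hence "(\<not> E y a) \<or> (\<not> E y b)" by blast
    then show False
    proof
      assume nya: "\<not> E y a"
      define I where "I = insert a (insert y (insert b' (X - {a,b,y})))"
      have "card I = card X" unfolding I_def
      proof -
        have "a \<notin> X - {a,b,y}" "y \<notin> X - {a,b,y}" "b' \<notin> X - {a,b,y}" "a \<noteq> y" "a \<noteq> b'" "y \<noteq> b'"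
          using b'(2) yV aX by auto
        moreover have "finite (X - {a,b,y})" using finX by simp
        ultimately show "card (insert a (insert y (insert b' (X - {a,b,y})))) = card X"
          using cX by (simp only: card_insert_disjoint finite_insert insert_iff) simp
      qed
      moreover have "independent_set V E I"
        unfolding independent_set_def I_def
      proof (intro conjI ballI)
        show "insert a (insert y (insert b' (X - {a,b,y}))) \<subseteq> V" using b'(1) XV aV yV by auto
      next
        have Zy: "\<And>p. p \<in> X - {a,b,y} \<Longrightarrow> \<not> E p y"
        proof
          fix p assume p: "p \<in> X - {a,b,y}" and py: "E p y"
          have pZ: "p \<in> X - Y - {a,b}" using p Yy by auto
          have pX: "p \<in> X" "p \<in> V" "p \<noteq> y" "p \<noteq> a" "p \<noteq> b" using p XV by auto
          have f: "\<not> E a' y" "\<not> E a' p" "\<not> E a p" "a' \<noteq> p" "a' \<noteq> y" "a' \<noteq> a"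
            using a'(2,5) pX yV Zna[OF pZ] aX by metis+
          have "distinct [a, a', y, p]" using f pX yV by auto
          from K[OF aV a'(1) yV(1) pX(2) this a'(4) symE[THEN iffD1, OF py]]
          show False using f nya symE by metis
        qed
        fix p q assume p: "p \<in> insert a (insert y (insert b' (X - {a,b,y})))"
          and q: "q \<in> insert a (insert y (insert b' (X - {a,b,y})))"
        have Z: "\<And>p. p \<in> X - {a,b,y} \<Longrightarrow> p \<in> X - Y - {a,b}" using Yy by auto
        let ?I = "insert a (insert y (insert b' (X - {a,b,y})))"
        have Aa: "\<And>r. r \<in> ?I \<Longrightarrow> \<not> E a r"
        proof -
          fix r assume r: "r \<in> ?I"
          show "\<not> E a r"
          proof (cases "r = a \<or> r = y \<or> r = b'")
            case True then show ?thesis using irr nya symE b'(5) aX bX anb by metis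
          next
            case False then have "r \<in> X - Y - {a,b}" using r Z by blast
            then show ?thesis using Zna by blast
          qed
        qed
        have Ay: "\<And>r. r \<in> ?I \<Longrightarrow> \<not> E y r"
        proof -
          fix r assume r: "r \<in> ?I"
          show "\<not> E y r"
          proof (cases "r = a \<or> r = y \<or> r = b'")
            case True then show ?thesis using irr nya symE b'(5) yV by metis
          next
            case False then have "r \<in> X - {a,b,y}" using r by blast
            then show ?thesis using Zy symE by metis
          qed
        qed
        have Ab: "\<And>r. r \<in> ?I \<Longrightarrow> \<not> E b' r"
        proof -
          fix r assume r: "r \<in> ?I"
          show "\<not> E b' r"
          proof (cases "r = b'")
            case True then show ?thesis using irr by metis
          next
            case False then have "r \<in> X" "r \<noteq> b" using r aX bX yV anb by auto
            then show ?thesis using b'(5) by blast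
          qed
        qed
        show "\<not> E p q"
        proof (cases "p = a \<or> p = y \<or> p = b'")
          case True then show ?thesis using Aa Ay Ab q by blast
        next
          case pF: False
          show ?thesis
          proof (cases "q = a \<or> q = y \<or> q = b'")
            case True then show ?thesis using Aa Ay Ab p symE by metis
          next
            case False
            then have "q \<in> X - Y - {a,b}" "p \<in> X - Y - {a,b}" using p q pF Z by blast+
            then show ?thesis using Zind by blast
          qed
        qed
      qed
      ultimately show False using small by force
    next
      assume nyb: "\<not> E y b"
      define I where "I = insert b (insert y (insert a' (X - {a,b,y})))"
      have "card I = card X" unfolding I_def
      proof -
        have "b \<notin> X - {a,b,y}" "y \<notin> X - {a,b,y}" "a' \<notin> X - {a,b,y}" "b \<noteq> y" "b \<noteq> a'" "y \<noteq> a'"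
          using a'(2) yV bX by auto
        moreover have "finite (X - {a,b,y})" using finX by simp
        ultimately show "card (insert b (insert y (insert a' (X - {a,b,y})))) = card X"
          using cX by (simp only: card_insert_disjoint finite_insert insert_iff) simp
      qed
      moreover have "independent_set V E I"
        unfolding independent_set_def I_def
      proof (intro conjI ballI)
        show "insert b (insert y (insert a' (X - {a,b,y}))) \<subseteq> V" using a'(1) XV bV yV by auto
      next
        have Zy: "\<And>p. p \<in> X - {a,b,y} \<Longrightarrow> \<not> E p y"
        proof
          fix p assume p: "p \<in> X - {a,b,y}" and py: "E p y"
          have pZ: "p \<in> X - Y - {a,b}" using p Yy by auto
          have pX: "p \<in> X" "p \<in> V" "p \<noteq> y" "p \<noteq> b" "p \<noteq> a" using p XV by auto
          have f: "\<not> E b' y" "\<not> E b' p" "\<not> E b p" "b' \<noteq> p" "b' \<noteq> y" "b' \<noteq> b"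
            using b'(2,5) pX yV Zna[OF pZ] bX by metis+
          have "distinct [b, b', y, p]" using f pX yV by auto
          from K[OF bV b'(1) yV(1) pX(2) this b'(4) symE[THEN iffD1, OF py]]
          show False using f nyb symE by metis
        qed
        fix p q assume p: "p \<in> insert b (insert y (insert a' (X - {a,b,y})))"
          and q: "q \<in> insert b (insert y (insert a' (X - {a,b,y})))"
        have Z: "\<And>p. p \<in> X - {a,b,y} \<Longrightarrow> p \<in> X - Y - {a,b}" using Yy by auto
        let ?I = "insert b (insert y (insert a' (X - {a,b,y})))"
        have Aa: "\<And>r. r \<in> ?I \<Longrightarrow> \<not> E b r"
        proof -
          fix r assume r: "r \<in> ?I"
          show "\<not> E b r"
          proof (cases "r = b \<or> r = y \<or> r = a'")
            case True then show ?thesis using irr nyb symE a'(5) aX bX anb by metis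
          next
            case False then have "r \<in> X - Y - {a,b}" using r Z by blast
            then show ?thesis using Zna by blast
          qed
        qed
        have Ay: "\<And>r. r \<in> ?I \<Longrightarrow> \<not> E y r"
        proof -
          fix r assume r: "r \<in> ?I"
          show "\<not> E y r"
          proof (cases "r = b \<or> r = y \<or> r = a'")
            case True then show ?thesis using irr nyb symE a'(5) yV by metis
          next
            case False then have "r \<in> X - {a,b,y}" using r by blast
            then show ?thesis using Zy symE by metis
          qed
        qed
        have Ab: "\<And>r. r \<in> ?I \<Longrightarrow> \<not> E a' r"
        proof -
          fix r assume r: "r \<in> ?I"
          show "\<not> E a' r"
          proof (cases "r = a'")
            case True then show ?thesis using irr by metis
          next
            case False then have "r \<in> X" "r \<noteq> a" using r aX bX yV anb by auto
            then show ?thesis using a'(5) by blast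
          qed
        qed
        show "\<not> E p q"
        proof (cases "p = b \<or> p = y \<or> p = a'")
          case True then show ?thesis using Aa Ay Ab q by blast
        next
          case pF: False
          show ?thesis
          proof (cases "q = b \<or> q = y \<or> q = a'")
            case True then show ?thesis using Aa Ay Ab p symE by metis
          next
            case False
            then have "q \<in> X - Y - {a,b}" "p \<in> X - Y - {a,b}" using p q pF Z by blast+
            then show ?thesis using Zind by blast
          qed
        qed
      qed
      ultimately show False using small by force
    qed
  qed
  show ?thesis using Yy both unfolding Y_def[symmetric] by simp
qed

end
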